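(* Let $e\ge2$, let $\lambda$ be an $e$-regular partition with outer corners $c_1<\dots<c_r$ and inner corners $i_1<\dots<i_{r+1}$, and let $\omega^{(0)},\dots,\omega^{(r)}$ and $h_1,\dots,h_r$ be as in the outer flattening construction. Then for each $k\in\{1,\dots,r\}$: $h_k\in[i_k-1,i_k)$; the functions $\omega^{(k-1)}$ and $\omega^{(k)}$ coincide outside $(i_k-1,c_k)$; and $0\le\omega^{(k)}(s)-\omega^{(k-1)}(s)\le e$ for all $s\in(i_k-1,c_k)$.
   Context: A partition $\lambda=(\lambda_1\ge\dots\ge\lambda_h>0)$ is $e$-regular if $\lambda_i>\lambda_{i+e-1}$ for all $i\le h-e+1$. $Y(\lambda)=\{(a,b):1\le a\le h,1\le b\le\lambda_a\}$; node $(a,b)$ corresponds to the closed square with vertices $(a-b,a+b),(a-b\pm1,a+b-1),(a-b,a+b-2)$, and $\omega_\lambda(x)=\max(|x|,\sup\{y:(x,y)\text{ lies in one of these squares}\})$; $\omega_\lambda$ is piecewise linear with slope $\pm1$ on each $(k,k+1)$, $k\in\mathbb Z$. An integer $c$ is an outer (resp. inner) corner if $\omega_\lambda'=1$ on $(c-1,c)$ and $-1$ on $(c,c+1)$ (resp. $-1$ then $1$). Let $\alpha_e=1-2e^{-1}$. Outer flattening: $\omega^{(0)}=\omega_\lambda$; for $k=1,\dots,r$, let $h_k<c_k$ be the abscissa of the first point where the line of slope $\alpha_e$ through $(c_k,\omega_\lambda(c_k))$, followed from $c_k$ in the negative direction, meets the graph of $\omega^{(k-1)}$; define $\omega^{(k)}=\omega^{(k-1)}$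 on $(-\infty,h_k]\cup[c_k,\infty)$ and $\omega^{(k)}(s)=\omega_\lambda(c_k)+\alpha_e(s-c_k)$ for $s\in[h_k,c_k]$. *)

theory Defs
  imports Complex_Main
begin

text \<open>A partition is a finite non-increasing list of positive integers
  (lam ! (a-1) is the part lambda_a, length lam = h).\<close>
definition is_partition :: "nat list \<Rightarrow> bool" where
  "is_partition lam \<longleftrightarrow> sorted_wrt (\<ge>) lam \<and> (\<forall>x\<in>set lam. 0 < x)"

definition e_regular :: "nat \<Rightarrow> nat list \<Rightarrow> bool" where
  "e_regular e lam \<longleftrightarrow>
     (\<forall>i::nat. 1 \<le> i \<and> i + e - 1 \<le> length lam \<longrightarrow> lam ! (i - 1) > lam ! (i + e - 2))"

definition young :: "nat list \<Rightarrow> (nat \<times> nat) set" where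
  "young lam = {(a, b). 1 \<le> a \<and> a \<le> length lam \<and> 1 \<le> b \<and> b \<le> lam ! (a - 1)}"

definition node_square :: "nat \<times> nat \<Rightarrow> (real \<times> real) set" where
  "node_square n = (case n of (a, b) \<Rightarrow>
     {(x, y). \<bar>x - (real a - real b)\<bar> + \<bar>y - (real a + real b - 1)\<bar> \<le> 1})"

text \<open>omega_lambda(x) = max(|x|, sup{y : (x,y) in one of the squares}),
  where the sup of the empty set is ignored.\<close>
definition omega :: "nat list \<Rightarrow> real \<Rightarrow> real" where
  "omega lam x = Sup ({\<bar>x\<bar>} \<union> {y. \<exists>n\<in>young lam. (x, y) \<in> node_square n})"

definition outer_corner :: "(real \<Rightarrow> real) \<Rightarrow> int \<Rightarrow> bool" where
  "outer_corner w c \<longleftrightarrow>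
     (\<forall>x\<in>{real_of_int c - 1<..<real_of_int c}. (w has_real_derivative 1) (at x)) \<and>
     (\<forall>x\<in>{real_of_int c<..<real_of_int c + 1}. (w has_real_derivative -1) (at x))"

definition inner_corner :: "(real \<Rightarrow> real) \<Rightarrow> int \<Rightarrow> bool" where
  "inner_corner w c \<longleftrightarrow>
     (\<forall>x\<in>{real_of_int c - 1<..<real_of_int c}. (w has_real_derivative -1) (at x)) \<and>
     (\<forall>x\<in>{real_of_int c<..<real_of_int c + 1}. (w has_real_derivative 1) (at x))"

definition alpha :: "nat \<Rightarrow> real" where
  "alpha e = 1 - 2 / real e"

text \<open>Parameters: slope a, outer corners c (indexed from 1),
  base profile w = omega_lambda.  oflat a c w k = omega^(k).\<close>
fun oflat :: "real \<Rightarrow> (nat \<Rightarrow> int) \<Rightarrow> (real \<Rightarrow> real) \<Rightarrow> nat \<Rightarrow> real \<Rightarrow> real" where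
  "oflat a c w 0 = w"
| "oflat a c w (Suc k) =
     (let ck = real_of_int (c (Suc k));
          hk = (GREATEST s. s < ck \<and> oflat a c w k s = w ck + a * (s - ck))
      in (\<lambda>s. if hk \<le> s \<and> s \<le> ck then w ck + a * (s - ck) else oflat a c w k s))"

definition hpt :: "real \<Rightarrow> (nat \<Rightarrow> int) \<Rightarrow> (real \<Rightarrow> real) \<Rightarrow> nat \<Rightarrow> real" where
  "hpt a c w k = (let ck = real_of_int (c k) in
     (GREATEST s. s < ck \<and> oflat a c w (k - 1) s = w ck + a * (s - ck)))"

end

theory Submission imports Defs begin

definition inR :: "nat list \<Rightarrow> nat \<Rightarrow> nat \<Rightarrow> bool" where
  "inR lam a b \<longleftrightarrow> a = 0 \<or> b = 0 \<or> (a \<le> length lam \<and> b \<le> lam ! (a - 1))"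

definition Sd :: "nat list \<Rightarrow> int \<Rightarrow> (nat \<times> nat) set" where
  "Sd lam n = {(a,b). inR lam a b \<and> int a - int b = n}"

definition V :: "nat list \<Rightarrow> int \<Rightarrow> int" where
  "V lam n = Max ((\<lambda>(a,b). int a + int b) ` Sd lam n)"

definition sig :: "nat list \<Rightarrow> int \<Rightarrow> int" where
  "sig lam n = V lam (n + 1) - V lam n"

lemma Sd_finite: "finite (Sd lam n)"
proof -
  have "Sd lam n \<subseteq> {..length lam + nat \<bar>n\<bar>} \<times> {..sum_list lam + nat \<bar>n\<bar>}"
  proof
    fix p assume "p \<in> Sd lam n"
    then obtain a b where p: "p = (a,b)" "inR lam a b" "int a - int b = n" by (auto simp: Sd_def)
    show "p \<in> {..length lam + nat \<bar>n\<bar>} \<times> {..sum_list lam + nat \<bar>n\<bar>}"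
    proof (cases "a = 0 \<or> b = 0")
      case True then show ?thesis using p by auto
    next
      case False
      then have "a \<le> length lam" "b \<le> lam ! (a - 1)" using p(2) by (auto simp: inR_def)
      moreover have "lam ! (a - 1) \<le> sum_list lam"
        using False \<open>a \<le> length lam\<close> by (intro member_le_sum_list nth_mem) auto
      ultimately show ?thesis using p by auto
    qed
  qed
  then show ?thesis by (rule finite_subset) auto
qed

lemma Sd_ne: "Sd lam n \<noteq> {}"
proof (cases "n \<ge> 0")
  case True
  then have "(nat n, 0) \<in> Sd lam n" by (auto simp: Sd_def inR_def)
  then show ?thesis by auto
next
  case False
  then have "(0, nat (-n)) \<in> Sd lam n" by (auto simp: Sd_def inR_def)
  then show ?thesis by auto
qed

lemma V_ge: assumes "inR lam a b" shows "int a + int b \<le> V lam (int a - int b)"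
  unfolding V_def
proof (rule Max_ge)
  show "finite ((\<lambda>(a,b). int a + int b) ` Sd lam (int a - int b))" using Sd_finite by blast
  show "int a + int b \<in> (\<lambda>(a,b). int a + int b) ` Sd lam (int a - int b)"
    using assms by (auto simp: Sd_def intro!: image_eqI[where x="(a,b)"])
qed

lemma V_att: "\<exists>a b. inR lam a b \<and> int a - int b = n \<and> int a + int b = V lam n"
proof -
  have "V lam n \<in> (\<lambda>(a,b). int a + int b) ` Sd lam n"
    unfolding V_def by (rule Max_in) (auto simp: Sd_finite Sd_ne)
  then show ?thesis by (force simp: Sd_def)
qed

lemma inR_down:
  assumes "is_partition lam" "inR lam a b" "a' \<le> a" "b' \<le> b"
  shows "inR lam a' b'"
proof (cases "a' = 0 \<or> b' = 0")
  case True then show ?thesis by (auto simp: inR_def)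
next
  case False
  then have h: "a \<le> length lam" "b \<le> lam ! (a - 1)" using assms by (auto simp: inR_def)
  have "lam ! (a - 1) \<le> lam ! (a' - 1)"
  proof (cases "a' = a")
    case False
    with assms(3) \<open>\<not> (a' = 0 \<or> b' = 0)\<close> h(1) have "a' - 1 < a - 1" "a - 1 < length lam" by auto
    with assms(1) show ?thesis unfolding is_partition_def sorted_wrt_iff_nth_less by blast
  qed simp
  then show ?thesis using h assms False by (auto simp: inR_def)
qed

lemma V_step:
  assumes P: "is_partition lam" and v: "inR lam a b" "int a - int b = n" "int a + int b = V lam n"
  shows "(inR lam (a+1) b \<longrightarrow> V lam (n+1) = V lam n + 1)
       \<and> (\<not> inR lam (a+1) b \<longrightarrow> V lam (n+1) = V lam n - 1 \<and> b \<ge> 1)"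
proof (intro conjI impI)
  assume A: "inR lam (a+1) b"
  have "int (a+1) + int b \<le> V lam (int (a+1) - int b)" by (rule V_ge[OF A])
  then have ge: "V lam (n+1) \<ge> V lam n + 1" using v by (simp add: algebra_simps)
  obtain a' b' where w: "inR lam a' b'" "int a' - int b' = n + 1" "int a' + int b' = V lam (n+1)"
    using V_att by blast
  show "V lam (n+1) = V lam n + 1"
  proof (rule ccontr)
    assume "V lam (n+1) \<noteq> V lam n + 1"
    then have "a' \<ge> a + 2" "b' \<ge> b + 1" using ge w v by linarith+
    then have "inR lam (a+1) (b+1)" using inR_down[OF P w(1)] by simp
    from V_ge[OF this] v show False by simp
  qed
next
  assume A: "\<not> inR lam (a+1) b"
  then show "b \<ge> 1" by (cases b) (auto simp: inR_def)
  then have B: "inR lam a (b - 1)" using inR_down[OF P v(1)] by simp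
  have "int a + int (b-1) \<le> V lam (int a - int (b-1))" by (rule V_ge[OF B])
  moreover have "int a - int (b-1) = n + 1" "int a + int (b-1) = V lam n - 1"
    using v \<open>b \<ge> 1\<close> by auto
  ultimately have ge: "V lam (n+1) \<ge> V lam n - 1" by simp
  obtain a' b' where w: "inR lam a' b'" "int a' - int b' = n + 1" "int a' + int b' = V lam (n+1)"
    using V_att by blast
  show "V lam (n+1) = V lam n - 1"
  proof (rule ccontr)
    assume "V lam (n+1) \<noteq> V lam n - 1"
    then have "a' \<ge> a + 1" "b' \<ge> b" using ge w v by linarith+
    then have "inR lam (a+1) b" using inR_down[OF P w(1)] by simp
    with A show False by simp
  qed
qed

lemma sig_pm: assumes "is_partition lam" shows "sig lam n = 1 \<or> sig lam n = -1"
proof -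
  obtain a b where v: "inR lam a b" "int a - int b = n" "int a + int b = V lam n"
    using V_att by blast
  from V_step[OF assms v] show ?thesis unfolding sig_def by (cases "inR lam (a+1) b") auto
qed

lemma V_lip_nat: assumes "is_partition lam" shows "\<bar>V lam (n + int d) - V lam n\<bar> \<le> int d"
proof (induction d)
  case (Suc d)
  have "\<bar>V lam (n + int d + 1) - V lam (n + int d)\<bar> = 1"
    using sig_pm[OF assms, of "n + int d"] unfolding sig_def by auto
  with Suc show ?case by (simp add: algebra_simps)
qed simp

lemma V_lip: assumes "is_partition lam" shows "\<bar>V lam m - V lam n\<bar> \<le> \<bar>m - n\<bar>"
proof (cases "m \<ge> n")
  case True
  from V_lip_nat[OF assms, of n "nat (m - n)"] True show ?thesis by simp
next
  case False
  from V_lip_nat[OF assms, of m "nat (n - m)"] False show ?thesis by simp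
qed


lemma tent:
  assumes P: "is_partition lam" and t: "0 \<le> t" "t \<le> 1" and R: "inR lam p q"
  shows "real p + real q - \<bar>(of_int n + t) - (real p - real q)\<bar>
         \<le> of_int (V lam n) + of_int (sig lam n) * t"
proof -
  define m where "m = int p - int q"
  have g: "int p + int q \<le> V lam m" using V_ge[OF R] m_def by simp
  have l0: "\<bar>V lam m - V lam n\<bar> \<le> \<bar>m - n\<bar>" by (rule V_lip[OF P])
  have l1: "\<bar>V lam m - V lam (n+1)\<bar> \<le> \<bar>m - (n+1)\<bar>" by (rule V_lip[OF P])
  have c1: "int p + int q - \<bar>m - n\<bar> \<le> V lam n" using g l0 by linarith
  have c2: "int p + int q - \<bar>m - (n+1)\<bar> \<le> V lam (n+1)" using g l1 by linarith
  have mr: "real p - real q = of_int m" by (simp add: m_def)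
  have c1: "real p + real q - \<bar>of_int m - of_int n\<bar> \<le> of_int (V lam n)"
  proof -
    have "real_of_int (int p + int q - \<bar>m - n\<bar>) \<le> real_of_int (V lam n)" using c1 by (simp only: of_int_le_iff)
    then show ?thesis by simp
  qed
  have c2: "real p + real q - \<bar>of_int m - (of_int n + 1)\<bar> \<le> of_int (V lam (n+1))"
  proof -
    have "real_of_int (int p + int q - \<bar>m - (n+1)\<bar>) \<le> real_of_int (V lam (n+1))" using c2 by (simp only: of_int_le_iff)
    then show ?thesis by simp
  qed
  have sg: "real_of_int (V lam (n+1)) = of_int (V lam n) + of_int (sig lam n)" by (simp add: sig_def)
  have cases: "m \<le> n \<or> m \<ge> n + 1" by linarith
  have sg: "V lam (n+1) = V lam n + sig lam n" by (simp add: sig_def)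
  from sig_pm[OF P, of n] cases show ?thesis
  proof (elim disjE)
    assume s: "sig lam n = 1" and mm: "m \<le> n"
    then have "real p + real q - (of_int n - of_int m) \<le> of_int (V lam n)"
      using c1 by (simp add: abs_of_nonneg)
    then show ?thesis using s mm t unfolding mr by (simp add: abs_of_nonneg)
  next
    assume s: "sig lam n = 1" and mm: "m \<ge> n + 1"
    then have "real p + real q - (of_int m - of_int n - 1) \<le> of_int (V lam n) + 1"
      using c2 sg by (simp add: abs_of_nonpos)
    then show ?thesis using s mm t unfolding mr by (simp add: abs_of_nonpos)
  next
    assume s: "sig lam n = -1" and mm: "m \<le> n"
    then have "real p + real q - (of_int n - of_int m) \<le> of_int (V lam n)"
      using c1 by (simp add: abs_of_nonneg)
    then show ?thesis using s mm t unfolding mr by (simp add: abs_of_nonneg)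
  next
    assume s: "sig lam n = -1" and mm: "m \<ge> n + 1"
    then have "real p + real q - (of_int m - of_int n - 1) \<le> of_int (V lam n) - 1"
      using c2 sg by (simp add: abs_of_nonpos)
    then show ?thesis using s mm t unfolding mr by (simp add: abs_of_nonpos)
  qed
qed


lemma omega_eq:
  assumes P: "is_partition lam" and t: "0 \<le> t" "t \<le> 1"
  shows "omega lam (of_int n + t) = of_int (V lam n) + of_int (sig lam n) * t"
proof -
  define x where "x = of_int n + t"
  define z where "z = of_int (V lam n) + of_int (sig lam n) * t"
  let ?S = "{\<bar>x\<bar>} \<union> {y. \<exists>nd\<in>young lam. (x, y) \<in> node_square nd}"
  have ub: "y \<le> z" if "y \<in> ?S" for y
  proof -
    have T: "real p + real q - \<bar>x - (real p - real q)\<bar> \<le> z" if "inR lam p q" for p q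
      using tent[OF P t that] unfolding x_def z_def .
    show ?thesis
    proof (cases "y = \<bar>x\<bar>")
      case True
      show ?thesis
      proof (cases "x \<ge> 0")
        case True
        have "inR lam (nat \<lceil>x\<rceil>) 0" by (simp add: inR_def)
        have c: "x \<le> of_int \<lceil>x\<rceil>" by simp
        have "real (nat \<lceil>x\<rceil>) = of_int \<lceil>x\<rceil>" using True by simp
        with T[OF \<open>inR lam (nat \<lceil>x\<rceil>) 0\<close>] have "of_int \<lceil>x\<rceil> - \<bar>x - of_int \<lceil>x\<rceil>\<bar> \<le> z" by simp
        with c True \<open>y = \<bar>x\<bar>\<close> show ?thesis by simp
      next
        case False
        have "inR lam 0 (nat \<lceil>-x\<rceil>)" by (simp add: inR_def)
        have c: "-x \<le> of_int \<lceil>-x\<rceil>" by simp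
        have "real (nat \<lceil>-x\<rceil>) = of_int \<lceil>-x\<rceil>" using False by simp
        with T[OF \<open>inR lam 0 (nat \<lceil>-x\<rceil>)\<close>] have "of_int \<lceil>-x\<rceil> - \<bar>x + of_int \<lceil>-x\<rceil>\<bar> \<le> z" by simp
        moreover have "\<bar>x + of_int \<lceil>-x\<rceil>\<bar> = x + of_int \<lceil>-x\<rceil>" using c by linarith
        ultimately show ?thesis using False \<open>y = \<bar>x\<bar>\<close> by linarith
      qed
    next
      case False
      with that obtain a b where ab: "(a,b) \<in> young lam" "(x,y) \<in> node_square (a,b)" by auto
      then have "inR lam a b" by (auto simp: young_def inR_def)
      from T[OF this] ab(2) show ?thesis by (auto simp: node_square_def)
    qed
  qed
  obtain a b where v: "inR lam a b" "int a - int b = n" "int a + int b = V lam n"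
    using V_att by blast
  have vr: "real a - real b = of_int n" "real a + real b = of_int (V lam n)"
    using v(2,3) by (metis of_int_diff of_int_of_nat_eq, metis of_int_add of_int_of_nat_eq)
  have mem: "z \<in> ?S"
  proof (cases "inR lam (a+1) b")
    case True
    then have s: "sig lam n = 1" using V_step[OF P v] by (simp add: sig_def)
    show ?thesis
    proof (cases "b = 0")
      case True
      then have "\<bar>x\<bar> = z" using vr s t by (simp add: x_def z_def)
      then show ?thesis by simp
    next
      case False
      then have "(a+1, b) \<in> young lam" using \<open>inR lam (a+1) b\<close> by (auto simp: young_def inR_def)
      moreover have "(x, z) \<in> node_square (a+1, b)"
        using vr s t by (simp add: x_def z_def node_square_def)
      ultimately show ?thesis by blast
    qed
  next
    case False
    then have s: "sig lam n = -1" and b1: "b \<ge> 1" using V_step[OF P v] by (auto simp: sig_def)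
    show ?thesis
    proof (cases "a = 0")
      case True
      then have "\<bar>x\<bar> = z" using vr s t b1 by (simp add: x_def z_def)
      then show ?thesis by simp
    next
      case False
      then have "(a, b) \<in> young lam" using v(1) b1 by (auto simp: young_def inR_def)
      moreover have "(x, z) \<in> node_square (a, b)"
        using vr s t by (simp add: x_def z_def node_square_def)
      ultimately show ?thesis by blast
    qed
  qed
  have "omega lam x = z" unfolding omega_def
    by (rule cSup_eq_maximum[OF mem ub])
  then show ?thesis by (simp add: x_def z_def)
qed


lemma omega_deriv:
  assumes P: "is_partition lam" and y: "of_int n < y" "y < of_int n + 1"
  shows "(omega lam has_real_derivative of_int (sig lam n)) (at y)"
proof -
  define g where "g u = of_int (V lam n) + of_int (sig lam n) * (u - of_int n)" for u :: real
  have "(g has_real_derivative of_int (sig lam n)) (at y)"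
    unfolding g_def by (auto intro!: derivative_eq_intros)
  then show ?thesis
  proof (rule has_field_derivative_transform_within_open)
    show "open {of_int n <..< of_int n + 1::real}" by simp
    show "y \<in> {of_int n <..< of_int n + 1}" using y by simp
    fix u :: real assume "u \<in> {of_int n <..< of_int n + 1}"
    then have "omega lam (of_int n + (u - of_int n)) = g u"
      unfolding g_def by (intro omega_eq[OF P]) auto
    then show "g u = omega lam u" by simp
  qed
qed

lemma sig_of_deriv:
  assumes P: "is_partition lam" and d: "(omega lam has_real_derivative of_int s) (at y)"
    and y: "of_int n < y" "y < of_int n + 1"
  shows "sig lam n = s"
proof -
  have "(of_int (sig lam n) :: real) = of_int s"
    using DERIV_unique[OF omega_deriv[OF P y] d] .
  then show ?thesis by simp
qed

lemma outer_iff: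
  assumes P: "is_partition lam"
  shows "outer_corner (omega lam) x \<longleftrightarrow> sig lam (x - 1) = 1 \<and> sig lam x = -1"
proof
  assume A: "outer_corner (omega lam) x"
  have "(omega lam has_real_derivative of_int 1) (at (of_int x - 1/2))"
    using A unfolding outer_corner_def by simp
  from sig_of_deriv[OF P this, of "x - 1"] have 1: "sig lam (x - 1) = 1" by simp
  have "(omega lam has_real_derivative of_int (-1)) (at (of_int x + 1/2))"
    using A unfolding outer_corner_def by simp
  from sig_of_deriv[OF P this, of "x"] have 2: "sig lam x = -1" by simp
  from 1 2 show "sig lam (x - 1) = 1 \<and> sig lam x = -1" ..
next
  assume A: "sig lam (x - 1) = 1 \<and> sig lam x = -1"
  show "outer_corner (omega lam) x" unfolding outer_corner_def
  proof (intro conjI ballI)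
    fix y assume "y \<in> {real_of_int x - 1<..<real_of_int x}"
    then have "(omega lam has_real_derivative of_int (sig lam (x - 1))) (at y)"
      by (intro omega_deriv[OF P]) auto
    then show "(omega lam has_real_derivative 1) (at y)" using A by simp
  next
    fix y assume "y \<in> {real_of_int x <..<real_of_int x + 1}"
    then have "(omega lam has_real_derivative of_int (sig lam x)) (at y)"
      by (intro omega_deriv[OF P]) auto
    then show "(omega lam has_real_derivative -1) (at y)" using A by simp
  qed
qed

lemma inner_iff:
  assumes P: "is_partition lam"
  shows "inner_corner (omega lam) x \<longleftrightarrow> sig lam (x - 1) = -1 \<and> sig lam x = 1"
proof
  assume A: "inner_corner (omega lam) x"
  have "(omega lam has_real_derivative of_int (-1)) (at (of_int x - 1/2))"
    using A unfolding inner_corner_def by simp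
  from sig_of_deriv[OF P this, of "x - 1"] have 1: "sig lam (x - 1) = -1" by simp
  have "(omega lam has_real_derivative of_int 1) (at (of_int x + 1/2))"
    using A unfolding inner_corner_def by simp
  from sig_of_deriv[OF P this, of "x"] have 2: "sig lam x = 1" by simp
  from 1 2 show "sig lam (x - 1) = -1 \<and> sig lam x = 1" ..
next
  assume A: "sig lam (x - 1) = -1 \<and> sig lam x = 1"
  show "inner_corner (omega lam) x" unfolding inner_corner_def
  proof (intro conjI ballI)
    fix y assume "y \<in> {real_of_int x - 1<..<real_of_int x}"
    then have "(omega lam has_real_derivative of_int (sig lam (x - 1))) (at y)"
      by (intro omega_deriv[OF P]) auto
    then show "(omega lam has_real_derivative -1) (at y)" using A by simp
  next
    fix y assume "y \<in> {real_of_int x <..<real_of_int x + 1}"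
    then have "(omega lam has_real_derivative of_int (sig lam x)) (at y)"
      by (intro omega_deriv[OF P]) auto
    then show "(omega lam has_real_derivative 1) (at y)" using A by simp
  qed
qed


lemma sig_left:
  fixes n :: int
  assumes P: "is_partition lam" and n: "n + int (sum_list lam) + 1 \<le> 0"
  shows "sig lam n = -1"
proof -
  obtain a b where v: "inR lam a b" "int a - int b = n" "int a + int b = V lam n"
    using V_att by blast
  have a0: "a = 0"
  proof (rule ccontr)
    assume "a \<noteq> 0"
    moreover have "b \<noteq> 0" using v(2) n by auto
    ultimately have "a \<le> length lam" "b \<le> lam ! (a - 1)" using v(1) by (auto simp: inR_def)
    moreover have "lam ! (a - 1) \<le> sum_list lam"
      using \<open>a \<noteq> 0\<close> \<open>a \<le> length lam\<close> by (intro member_le_sum_list nth_mem) auto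
    ultimately show False using v(2) n \<open>a \<noteq> 0\<close> by linarith
  qed
  have "\<not> inR lam (a+1) b"
  proof
    assume "inR lam (a+1) b"
    moreover have "b \<noteq> 0" using v(2) n by auto
    ultimately have "1 \<le> length lam" "b \<le> lam ! 0" using a0 by (auto simp: inR_def)
    moreover have "lam ! 0 \<le> sum_list lam"
      using \<open>1 \<le> length lam\<close> by (intro member_le_sum_list nth_mem) auto
    ultimately show False using v(2) n a0 by linarith
  qed
  with V_step[OF P v] show ?thesis by (simp add: sig_def)
qed

definition vtx :: "nat list \<Rightarrow> int \<Rightarrow> nat \<Rightarrow> nat \<Rightarrow> bool" where
  "vtx lam n a b \<longleftrightarrow> inR lam a b \<and> int a - int b = n \<and> int a + int b = V lam n"

lemma run_bound:
  assumes P: "is_partition lam" and R: "e_regular e lam" and e: "e \<ge> 1"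
    and sc: "sig lam c = -1" and run: "\<And>m. c - int e \<le> m \<Longrightarrow> m < c \<Longrightarrow> sig lam m = 1"
  shows False
proof -
  obtain a b where v: "vtx lam (c - int e) a b" using V_att unfolding vtx_def by blast
  have vj: "vtx lam (c - int e + int j) (a + j) b" if "j \<le> e" for j
    using that
  proof (induction j)
    case 0 then show ?case using v by simp
  next
    case (Suc j)
    then have IH: "vtx lam (c - int e + int j) (a + j) b" by simp
    have s1: "sig lam (c - int e + int j) = 1" using Suc.prems by (intro run) auto
    from IH have vv: "inR lam (a+j) b" "int (a+j) - int b = c - int e + int j"
        "int (a+j) + int b = V lam (c - int e + int j)" unfolding vtx_def by auto
    have "inR lam (a + j + 1) b"
    proof (rule ccontr)
      assume "\<not> inR lam (a + j + 1) b"
      with V_step[OF P vv] s1 show False by (simp add: sig_def)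
    qed
    with V_step[OF P vv] vv show ?case unfolding vtx_def by (auto simp: algebra_simps)
  qed
  have ve: "vtx lam c (a + e) b" using vj[of e] by simp
  then have vv: "inR lam (a+e) b" "int (a+e) - int b = c" "int (a+e) + int b = V lam c"
    unfolding vtx_def by auto
  have "\<not> inR lam (a + e + 1) b"
  proof
    assume "inR lam (a + e + 1) b"
    with V_step[OF P vv] sc show False by (simp add: sig_def)
  qed
  with V_step[OF P vv] have b1: "b \<ge> 1" by auto
  have lamj: "a + j \<le> length lam \<and> lam ! (a + j - 1) = b" if "1 \<le> j" "j \<le> e" for j
  proof -
    have v1: "vtx lam (c - int e + int j) (a + j) b" using vj that by simp
    have v0: "vtx lam (c - int e + int (j - 1)) (a + (j - 1)) b" using vj[of "j - 1"] that by linarith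
    have "inR lam (a+j) b" using v1 unfolding vtx_def by simp
    with b1 that have h: "a + j \<le> length lam" "b \<le> lam ! (a + j - 1)" by (auto simp: inR_def)
    have "\<not> inR lam (a + j) (b + 1)"
    proof
      assume A: "inR lam (a + j) (b + 1)"
      have eq: "int (a + j) - int (b + 1) = c - int e + int (j - 1)"
        "int (a + (j - 1)) + int b = V lam (c - int e + int (j - 1))"
        using v0 that unfolding vtx_def by auto
      have "int (a + j) + int (b + 1) \<le> V lam (c - int e + int (j - 1))"
        using V_ge[OF A] unfolding eq(1) .
      with eq(2) that show False by linarith
    qed
    with h that have "lam ! (a + j - 1) \<le> b" by (auto simp: inR_def)
    with h show ?thesis by simp
  qed
  from lamj[of 1] lamj[of e] e have "lam ! a = b" "lam ! (a + e - 1) = b" "a + e \<le> length lam" by auto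
  moreover have "lam ! (a + 1 - 1) > lam ! (a + 1 + e - 2)"
  proof -
    have "1 \<le> a + 1 \<and> a + 1 + e - 1 \<le> length lam" using \<open>a + e \<le> length lam\<close> by simp
    with R show ?thesis unfolding e_regular_def by blast
  qed
  ultimately show False using e by (simp add: add.commute)
qed


lemma cnt_ge:
  fixes f :: "nat \<Rightarrow> int"
  assumes sm: "strict_mono_on {1..N} f" and k: "k \<in> {1..N}"
  shows "k \<le> card {j\<in>{1..N}. f j \<le> x} \<longleftrightarrow> f k \<le> x"
proof
  assume "f k \<le> x"
  have "{1..k} \<subseteq> {j\<in>{1..N}. f j \<le> x}"
  proof
    fix j assume j: "j \<in> {1..k}"
    have "f j \<le> f k"
    proof (cases "j = k")
      case False
      then have "f j < f k" using sm k j by (intro strict_mono_onD[OF sm]) auto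
      then show ?thesis by simp
    qed simp
    then show "j \<in> {j\<in>{1..N}. f j \<le> x}" using j k \<open>f k \<le> x\<close> by auto
  qed
  from card_mono[OF _ this] show "k \<le> card {j\<in>{1..N}. f j \<le> x}" by simp
next
  assume A: "k \<le> card {j\<in>{1..N}. f j \<le> x}"
  show "f k \<le> x"
  proof (rule ccontr)
    assume "\<not> f k \<le> x"
    have "{j\<in>{1..N}. f j \<le> x} \<subseteq> {1..k-1}"
    proof
      fix j assume j: "j \<in> {j\<in>{1..N}. f j \<le> x}"
      have "\<not> k \<le> j"
      proof
        assume "k \<le> j"
        then have "f k \<le> f j"
        proof (cases "j = k")
          case False
          then have "f k < f j" using sm k j \<open>k \<le> j\<close> by (intro strict_mono_onD[OF sm]) auto
          then show ?thesis by simp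
        qed simp
        with j \<open>\<not> f k \<le> x\<close> show False by auto
      qed
      then show "j \<in> {1..k-1}" using j by auto
    qed
    from card_mono[OF _ this] A k show False by simp linarith
  qed
qed

lemma cnt_step:
  fixes f :: "nat \<Rightarrow> int"
  assumes inj: "inj_on f A" and fin: "finite A"
  shows "card {j\<in>A. f j \<le> x + 1} = card {j\<in>A. f j \<le> x} + (if x + 1 \<in> f ` A then 1 else 0)"
proof -
  have U: "{j\<in>A. f j \<le> x + 1} = {j\<in>A. f j \<le> x} \<union> {j\<in>A. f j = x + 1}" by auto
  have c2: "card {j\<in>A. f j = x + 1} = (if x + 1 \<in> f ` A then 1 else 0)"
  proof (cases "x + 1 \<in> f ` A")
    case True
    then obtain j0 where j0: "j0 \<in> A" "f j0 = x + 1" by auto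
    then have "{j\<in>A. f j = x + 1} = {j0}" using inj by (auto simp: inj_on_def)
    then show ?thesis using True by simp
  next
    case False
    then have "{j\<in>A. f j = x + 1} = {}" by force
    then show ?thesis using False by (simp only: card.empty) simp
  qed
  have "card {j\<in>A. f j \<le> x + 1} = card {j\<in>A. f j \<le> x} + card {j\<in>A. f j = x + 1}"
    unfolding U by (rule card_Un_disjoint) (use fin in auto)
  with c2 show ?thesis by simp
qed


lemma count_eq:
  fixes c i :: "nat \<Rightarrow> int" and x :: int and r :: nat
  assumes P: "is_partition lam"
    and smc: "strict_mono_on {1..r} c" and cc: "c ` {1..r} = {x. outer_corner (omega lam) x}"
    and smi: "strict_mono_on {1..r+1} i" and ii: "i ` {1..r+1} = {x. inner_corner (omega lam) x}"
  shows "card {j\<in>{1..r+1}. i j \<le> x} = card {j\<in>{1..r}. c j \<le> x} + (if sig lam x = 1 then 1 else 0)"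
proof -
  define x0 where "x0 = - int (sum_list lam) - 1"
  have sL: "sig lam y = -1" if "y \<le> x0" for y
    using sig_left[OF P, of y] that by (simp add: x0_def)
  have inn: "z \<in> i ` {1..r+1} \<longleftrightarrow> sig lam (z - 1) = -1 \<and> sig lam z = 1" for z
    using ii inner_iff[OF P] by auto
  have out: "z \<in> c ` {1..r} \<longleftrightarrow> sig lam (z - 1) = 1 \<and> sig lam z = -1" for z
    using cc outer_iff[OF P] by auto
  have base0: "card {j\<in>{1..r+1}. i j \<le> y} = card {j\<in>{1..r}. c j \<le> y} + (if sig lam y = 1 then 1 else 0)"
    if "y \<le> x0" for y
  proof -
    have E1: "{j\<in>{1..r+1}. i j \<le> y} = {}"
    proof (rule ccontr)
      assume "{j\<in>{1..r+1}. i j \<le> y} \<noteq> {}"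
      then obtain j where "j \<in> {1..r+1}" "i j \<le> y" by auto
      then have "sig lam (i j) = 1" using inn[of "i j"] by auto
      with sL[of "i j"] \<open>i j \<le> y\<close> that show False by simp
    qed
    have E2: "{j\<in>{1..r}. c j \<le> y} = {}"
    proof (rule ccontr)
      assume "{j\<in>{1..r}. c j \<le> y} \<noteq> {}"
      then obtain j where "j \<in> {1..r}" "c j \<le> y" by auto
      then have "sig lam (c j - 1) = 1" using out[of "c j"] by auto
      with sL[of "c j - 1"] \<open>c j \<le> y\<close> that show False by simp
    qed
    show ?thesis unfolding E1 E2 using sL[OF that] by (simp only: card.empty) simp
  qed
  show ?thesis
  proof (cases "x \<le> x0")
    case True then show ?thesis by (rule base0)
  next
    case False
    then have "x0 \<le> x" by simp
    then show ?thesis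
    proof (induction x rule: int_ge_induct)
      case base then show ?case by (rule base0) simp
    next
      case (step y)
      have si: "card {j\<in>{1..r+1}. i j \<le> y + 1} = card {j\<in>{1..r+1}. i j \<le> y} + (if y + 1 \<in> i ` {1..r+1} then 1 else 0)"
        by (rule cnt_step) (use strict_mono_on_imp_inj_on[OF smi] in auto)
      have sc: "card {j\<in>{1..r}. c j \<le> y + 1} = card {j\<in>{1..r}. c j \<le> y} + (if y + 1 \<in> c ` {1..r} then 1 else 0)"
        by (rule cnt_step) (use strict_mono_on_imp_inj_on[OF smc] in auto)
      have "sig lam y = 1 \<or> sig lam y = -1" "sig lam (y+1) = 1 \<or> sig lam (y+1) = -1"
        using sig_pm[OF P] by auto
      then show ?case using si sc step.IH inn[of "y+1"] out[of "y+1"] by auto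
    qed
  qed
qed


lemma oflat_agree:
  fixes c :: "nat \<Rightarrow> int"
  assumes sm: "strict_mono_on {1..r} c"
  shows "m \<le> r \<Longrightarrow> m = 0 \<or> of_int (c m) \<le> s \<Longrightarrow> oflat a c w m s = w s"
proof (induction m arbitrary: s)
  case 0 then show ?case by simp
next
  case (Suc m)
  have cs: "of_int (c (Suc m)) \<le> s" using Suc.prems by simp
  show ?case
  proof (cases "(GREATEST t. t < of_int (c (Suc m)) \<and> oflat a c w m t = w (of_int (c (Suc m))) + a * (t - of_int (c (Suc m)))) \<le> s \<and> s \<le> of_int (c (Suc m))")
    case True
    then have "s = of_int (c (Suc m))" using cs by simp
    then show ?thesis using True by (simp add: Let_def)
  next
    case False
    have "m = 0 \<or> of_int (c m) \<le> s"
    proof (cases "m = 0")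
      case False
      then have "c m < c (Suc m)" using Suc.prems(1) by (intro strict_mono_onD[OF sm]) auto
      then have "of_int (c m) \<le> (of_int (c (Suc m)) :: real)" by simp
      then show ?thesis using cs by simp
    qed simp
    then have "oflat a c w m s = w s" using Suc by simp
    then show ?thesis using False by (auto simp: Let_def)
  qed
qed

lemma flat_arith:
  fixes W :: "real \<Rightarrow> real" and Y ik ck s0 al D :: real and e :: nat
  assumes e: "e \<ge> 2" and D: "D = ck - ik" "1 \<le> D" "D \<le> real e - 1"
    and al: "al = 1 - 2 / real e" and s0: "s0 = ik - D / (real e - 1)"
    and W1: "\<And>s. ik \<le> s \<Longrightarrow> s \<le> ck \<Longrightarrow> W s = Y + (s - ik)"
    and W2: "\<And>s. ik - 1 \<le> s \<Longrightarrow> s \<le> ik \<Longrightarrow> W s = Y - (s - ik)"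
  shows "ik - 1 \<le> s0" "s0 < ik" "W s0 = W ck + al * (s0 - ck)"
    "\<And>s. s0 < s \<Longrightarrow> s < ck \<Longrightarrow> W s < W ck + al * (s - ck)"
    "\<And>s. s0 \<le> s \<Longrightarrow> s \<le> ck \<Longrightarrow> 0 \<le> W ck + al * (s - ck) - W s \<and> W ck + al * (s - ck) - W s \<le> real e"
proof -
  define u where "u = 2 / real e"
  define q where "q = D / (real e - 1)"
  have e1: "real e - 1 > 0" "real e \<ge> 2" using e by auto
  have ue: "u * real e = 2" using e1 by (simp add: u_def)
  have u01: "0 < u" "u \<le> 1" using e1 by (auto simp: u_def field_simps)
  have qe: "q * (real e - 1) = D" using e1 by (simp add: q_def)
  have q01: "0 < q" "q \<le> 1" using e1 D by (auto simp: q_def field_simps)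
  have als: "al = 1 - u" using al u_def by simp
  have s0q: "s0 = ik - q" using s0 q_def by simp
  have Wck: "W ck = Y + D" using W1[of ck] D by simp
  have key: "u * (D + q) = 2 * q"
  proof -
    have "D + q = q * real e" using qe by (simp add: algebra_simps)
    then have "u * (D + q) = q * (u * real e)" by simp
    also have "\<dots> = 2 * q" using ue by simp
    finally show ?thesis .
  qed
  have uD: "u * D \<le> 2"
  proof -
    have "u * D \<le> u * real e" using D u01 by (intro mult_left_mono) auto
    then show ?thesis using ue by simp
  qed
  have gapA: "W ck + al * (s - ck) - W s = u * (ck - s)" if "ik \<le> s" "s \<le> ck" for s
    using W1[OF that] Wck D unfolding als by (simp add: algebra_simps)
  have gapB: "W ck + al * (s - ck) - W s = (2 - u) * (s - s0)" if "ik - 1 \<le> s" "s \<le> ik" for s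
  proof -
    have "W ck + al * (s - ck) - W s = D + (1 - u) * (s - ck) + (s - ik)"
      using W2[OF that] Wck als by simp
    also have "\<dots> = (2 - u) * (s - s0) + (u * (D + q) - 2 * q)"
    proof -
      have ck: "ck = ik + D" using D by simp
      show ?thesis unfolding ck s0q by (simp add: algebra_simps)
    qed
    finally show ?thesis using key by simp
  qed
  show "ik - 1 \<le> s0" "s0 < ik" using s0q q01 by auto
  show "W s0 = W ck + al * (s0 - ck)" using gapB[of s0] s0q q01 by simp
  show "W s < W ck + al * (s - ck)" if "s0 < s" "s < ck" for s
  proof (cases "s \<le> ik")
    case True
    have "0 < (2 - u) * (s - s0)" using u01 that by (intro mult_pos_pos) auto
    then show ?thesis using gapB[of s] True that s0q q01 by simp
  next
    case False
    have "0 < u * (ck - s)" using u01 that by (intro mult_pos_pos) auto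
    then show ?thesis using gapA[of s] False that by simp
  qed
  show "0 \<le> W ck + al * (s - ck) - W s \<and> W ck + al * (s - ck) - W s \<le> real e" if "s0 \<le> s" "s \<le> ck" for s
  proof (cases "s \<le> ik")
    case True
    have "0 \<le> (2 - u) * (s - s0)" using u01 that by (intro mult_nonneg_nonneg) auto
    moreover have "(2 - u) * (s - s0) \<le> (2 - u) * q" using u01 that True s0q by (intro mult_left_mono) auto
    moreover have "(2 - u) * q = u * D" using key by (simp add: algebra_simps)
    ultimately show ?thesis using gapB[of s] True that s0q q01 uD e1 by simp
  next
    case False
    have "0 \<le> u * (ck - s)" using u01 that by (intro mult_nonneg_nonneg) auto
    moreover have "u * (ck - s) \<le> u * D" using u01 that False D by (intro mult_left_mono) auto
    ultimately show ?thesis using gapA[of s] False that uD e1 by simp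
  qed
qed


theorem proposition5p3:
  fixes e :: nat and lam :: "nat list" and r :: nat
    and c :: "nat \<Rightarrow> int" and i :: "nat \<Rightarrow> int" and k :: nat
  assumes "e \<ge> 2"
    and "is_partition lam"
    and "e_regular e lam"
    and "strict_mono_on {1..r} c"
    and "c ` {1..r} = {x. outer_corner (omega lam) x}"
    and "strict_mono_on {1..r+1} i"
    and "i ` {1..r+1} = {x. inner_corner (omega lam) x}"
    and "k \<in> {1..r}"
  shows "hpt (alpha e) c (omega lam) k \<in> {real_of_int (i k) - 1 ..< real_of_int (i k)}
    \<and> (\<forall>s. s \<notin> {real_of_int (i k) - 1 <..< real_of_int (c k)} \<longrightarrow>
          oflat (alpha e) c (omega lam) k s = oflat (alpha e) c (omega lam) (k - 1) s)
    \<and> (\<forall>s\<in>{real_of_int (i k) - 1 <..< real_of_int (c k)}.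
          0 \<le> oflat (alpha e) c (omega lam) k s - oflat (alpha e) c (omega lam) (k - 1) s
        \<and> oflat (alpha e) c (omega lam) k s - oflat (alpha e) c (omega lam) (k - 1) s \<le> real e)"
proof -
  note e2 = assms(1) and P = assms(2) and R = assms(3) and smc = assms(4) and cc = assms(5)
    and smi = assms(6) and ii = assms(7) and kr = assms(8)
  define W where "W = omega lam"
  define al where "al = alpha e"
  define ck where "ck = c k"
  define ik where "ik = i k"
  have k1: "k \<in> {1..r+1}" using kr by auto
  have so: "sig lam (ck - 1) = 1" "sig lam ck = -1"
    using kr cc outer_iff[OF P, of ck] unfolding ck_def by auto
  have si: "sig lam (ik - 1) = -1" "sig lam ik = 1"
    using k1 ii inner_iff[OF P, of ik] unfolding ik_def by auto
  have cnt: "card {j\<in>{1..r+1}. i j \<le> x} = card {j\<in>{1..r}. c j \<le> x} + (if sig lam x = 1 then 1 else 0)" for x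
    by (rule count_eq[OF P smc cc smi ii])
  have gec: "k \<le> card {j\<in>{1..r}. c j \<le> x} \<longleftrightarrow> ck \<le> x" for x
    unfolding ck_def by (rule cnt_ge[OF smc kr])
  have gei: "k \<le> card {j\<in>{1..r+1}. i j \<le> x} \<longleftrightarrow> ik \<le> x" for x
    unfolding ik_def by (rule cnt_ge[OF smi k1])
  have ikck: "ik < ck"
  proof -
    have "k \<le> card {j\<in>{1..r+1}. i j \<le> ck}" using cnt[of ck] gec[of ck] so by simp
    then have "ik \<le> ck" using gei by blast
    moreover have "ik \<noteq> ck" using so si by auto
    ultimately show ?thesis by simp
  qed
  have run: "sig lam m = 1" if "ik \<le> m" "m < ck" for m
  proof (rule ccontr)
    assume "sig lam m \<noteq> 1"
    then have "card {j\<in>{1..r+1}. i j \<le> m} = card {j\<in>{1..r}. c j \<le> m}" using cnt[of m] by simp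
    moreover have "k \<le> card {j\<in>{1..r+1}. i j \<le> m}" using gei that by blast
    moreover have "\<not> k \<le> card {j\<in>{1..r}. c j \<le> m}" using gec that by simp
    ultimately show False by simp
  qed
  have prev: "c (k - 1) < ik" if "k \<ge> 2"
  proof -
    have km: "k - 1 \<in> {1..r}" using that kr by auto
    have "sig lam (c (k-1)) = -1" using km cc outer_iff[OF P, of "c (k-1)"] by auto
    then have "card {j\<in>{1..r+1}. i j \<le> c (k-1)} = card {j\<in>{1..r}. c j \<le> c (k-1)}"
      using cnt[of "c (k-1)"] by simp
    moreover have "c (k-1) < ck" unfolding ck_def using km kr that
      by (intro strict_mono_onD[OF smc]) auto
    then have "\<not> k \<le> card {j\<in>{1..r}. c j \<le> c (k-1)}" using gec by simp
    ultimately have "\<not> k \<le> card {j\<in>{1..r+1}. i j \<le> c (k-1)}" by simp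
    then show ?thesis using gei by simp
  qed
  have Dle: "ck - ik \<le> int e - 1"
  proof (rule ccontr)
    assume "\<not> ck - ik \<le> int e - 1"
    show False
    proof (rule run_bound[OF P R _ so(2)])
      show "1 \<le> e" using e2 by simp
      fix m assume "ck - int e \<le> m" "m < ck"
      then show "sig lam m = 1" using run \<open>\<not> ck - ik \<le> int e - 1\<close> by simp
    qed
  qed
  have Vup: "V lam (ik + int d) = V lam ik + int d" if "ik + int d \<le> ck" for d
    using that
  proof (induction d)
    case (Suc d)
    have "sig lam (ik + int d) = 1" using Suc.prems by (intro run) auto
    then have "V lam (ik + int d + 1) = V lam (ik + int d) + 1" by (simp add: sig_def)
    with Suc show ?case by (simp add: algebra_simps)
  qed simp
  define Y where "Y = real_of_int (V lam ik)"
  have W1: "W s = Y + (s - of_int ik)" if "of_int ik \<le> s" "s \<le> of_int ck" for s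
  proof (cases "s = of_int ck")
    case True
    have "V lam (ik + int (nat (ck - ik))) = V lam ik + int (nat (ck - ik))"
      using ikck by (intro Vup) simp
    then have "V lam ck = V lam ik + (ck - ik)" using ikck by simp
    moreover have "W (of_int ck + 0) = of_int (V lam ck) + of_int (sig lam ck) * 0"
      unfolding W_def by (rule omega_eq[OF P]) auto
    ultimately show ?thesis using True by (simp add: Y_def)
  next
    case False
    define n where "n = \<lfloor>s\<rfloor>"
    have n1: "ik \<le> n" using that(1) unfolding n_def by (simp add: le_floor_iff)
    have n2: "n < ck" using that(2) False unfolding n_def by (simp add: floor_less_iff)
    have t: "0 \<le> s - of_int n" "s - of_int n \<le> 1" unfolding n_def by linarith+
    have "W (of_int n + (s - of_int n)) = of_int (V lam n) + of_int (sig lam n) * (s - of_int n)"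
      unfolding W_def by (rule omega_eq[OF P t])
    moreover have "sig lam n = 1" using n1 n2 by (intro run)
    moreover have "V lam (ik + int (nat (n - ik))) = V lam ik + int (nat (n - ik))"
      using n1 n2 by (intro Vup) simp
    then have "V lam n = V lam ik + (n - ik)" using n1 by simp
    ultimately show ?thesis by (simp add: Y_def)
  qed
  have W2: "W s = Y - (s - of_int ik)" if "of_int ik - 1 \<le> s" "s \<le> of_int ik" for s
  proof -
    have t: "0 \<le> s - of_int (ik - 1)" "s - of_int (ik - 1) \<le> 1" using that by auto
    have "W (of_int (ik - 1) + (s - of_int (ik - 1))) = of_int (V lam (ik - 1)) + of_int (sig lam (ik - 1)) * (s - of_int (ik - 1))"
      unfolding W_def by (rule omega_eq[OF P t])
    moreover have "V lam ik = V lam (ik - 1) + sig lam (ik - 1)" unfolding sig_def by simp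
    ultimately show ?thesis using si by (simp add: Y_def)
  qed
  define D where "D = real_of_int (ck - ik)"
  define s0 where "s0 = of_int ik - D / (real e - 1)"
  have Dp: "D = of_int ck - of_int ik" "1 \<le> D" "D \<le> real e - 1"
    using ikck Dle unfolding D_def by auto
  have al: "al = 1 - 2 / real e" unfolding al_def alpha_def ..
  note FA = flat_arith[OF e2 Dp al s0_def W1 W2]
  have agree: "oflat al c W (k - 1) s = W s" if "of_int ik - 1 \<le> s" for s
  proof (rule oflat_agree[OF smc])
    show "k - 1 \<le> r" using kr by auto
    show "k - 1 = 0 \<or> real_of_int (c (k - 1)) \<le> s"
    proof (cases "k \<ge> 2")
      case True
      then have "c (k - 1) \<le> ik - 1" using prev by simp
      then have "real_of_int (c (k - 1)) \<le> of_int ik - 1" by linarith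
      then show ?thesis using that by simp
    qed simp
  qed
  have G: "(GREATEST s. s < of_int ck \<and> oflat al c W (k - 1) s = W (of_int ck) + al * (s - of_int ck)) = s0"
  proof (rule Greatest_equality)
    show "s0 < of_int ck \<and> oflat al c W (k - 1) s0 = W (of_int ck) + al * (s0 - of_int ck)"
      using FA(1,2,3) agree[of s0] ikck by simp
  next
    fix y assume y: "y < of_int ck \<and> oflat al c W (k - 1) y = W (of_int ck) + al * (y - of_int ck)"
    show "y \<le> s0"
    proof (rule ccontr)
      assume "\<not> y \<le> s0"
      then have "W y < W (of_int ck) + al * (y - of_int ck)" using FA(4) y by simp
      moreover have "oflat al c W (k - 1) y = W y" using agree \<open>\<not> y \<le> s0\<close> FA(1) by simp
      ultimately show False using y by simp
    qed
  qed
  have H: "hpt al c W k = s0" unfolding hpt_def Let_def ck_def[symmetric] using G .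
  have OK: "oflat al c W k s = (if s0 \<le> s \<and> s \<le> of_int ck then W (of_int ck) + al * (s - of_int ck) else oflat al c W (k - 1) s)" for s
  proof -
    have kS: "k = Suc (k - 1)" using kr by simp
    have "oflat al c W k s = oflat al c W (Suc (k - 1)) s" using kS by simp
    also have "\<dots> = (if s0 \<le> s \<and> s \<le> of_int ck then W (of_int ck) + al * (s - of_int ck) else oflat al c W (k - 1) s)"
      unfolding oflat.simps(2) Let_def using G kS[symmetric] unfolding ck_def by simp
    finally show ?thesis .
  qed
  have part1: "hpt al c W k \<in> {real_of_int ik - 1 ..< real_of_int ik}" using H FA(1,2) by simp
  have part2: "oflat al c W k s = oflat al c W (k - 1) s" if "s \<notin> {real_of_int ik - 1 <..< real_of_int ck}" for s
  proof (cases "s0 \<le> s \<and> s \<le> of_int ck")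
    case True
    then have "s = of_int ck \<or> s = s0" using that FA(1) by auto
    then show ?thesis
    proof
      assume "s = of_int ck"
      then show ?thesis using OK[of s] agree[of s] True ikck by simp
    next
      assume "s = s0"
      then show ?thesis using OK[of s] agree[of s] True FA(1,3) by simp
    qed
  next
    case False
    have "oflat al c W k s = oflat al c W (k - 1) s" unfolding OK[of s] if_not_P[OF False] ..
    then show ?thesis by simp
  qed
  have part3: "0 \<le> oflat al c W k s - oflat al c W (k - 1) s \<and> oflat al c W k s - oflat al c W (k - 1) s \<le> real e"
    if "s \<in> {real_of_int ik - 1 <..< real_of_int ck}" for s
  proof (cases "s0 \<le> s \<and> s \<le> of_int ck")
    case True
    then show ?thesis using OK[of s] agree[of s] that FA(5)[of s] by simp
  next
    case False
    have "oflat al c W k s = oflat al c W (k - 1) s" unfolding OK[of s] if_not_P[OF False] ..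
    then show ?thesis by simp
  qed
  show ?thesis using part1 part2 part3 unfolding W_def al_def ik_def ck_def by blast
qed

end
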